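(* Let $p(x) \in \mathbb{R}[x]$ be a non-constant real-rooted polynomial. Let $P(x) = \int_0^x p(y)\,dy$ and let $C \in \mathbb{R}$. Then $P(x)+C$ is real-rooted if and only if for every root $\mu$ of $p(x)$ we have: $P(\mu)+C \geq 0$ if $p'(\mu) < 0$; $P(\mu)+C \leq 0$ if $p'(\mu) > 0$; and $P(\mu)+C = 0$ if $p'(\mu) = 0$.
   Context: A nonzero polynomial $p(x) \in \mathbb{R}[x]$ is called real-rooted if every complex root of $p(x)$ is real. $p'(x)$ denotes the derivative of $p(x)$. *)

theory Defs
  imports "HOL-Computational_Algebra.Polynomial"
begin

definition real_rooted :: "real poly \<Rightarrow> bool" where
  "real_rooted p \<longleftrightarrow> p \<noteq> 0 \<and>
     (\<forall>z::complex. poly (map_poly complex_of_real p) z = 0 \<longrightarrow> z \<in> \<real>)"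

end

theory Submission imports Defs "HOL-Computational_Algebra.Fundamental_Theorem_Algebra" begin

lemma map_of_real_mult:
  fixes p q :: "real poly"
  shows "map_poly complex_of_real (p*q) = map_poly complex_of_real p * map_poly complex_of_real q"
  by (simp add: poly_eq_iff coeff_map_poly coeff_mult of_real_sum)

lemma poly_map_of_real_mult:
  fixes p q :: "real poly"
  shows "poly (map_poly complex_of_real (p*q)) z = poly (map_poly complex_of_real p) z * poly (map_poly complex_of_real q) z"
  by (simp add: map_of_real_mult)

lemma poly_map_of_real: "poly (map_poly complex_of_real p) (of_real x) = of_real (poly p x)"
  by (induction p) (auto simp: map_poly_pCons)

lemma degree_map_of_real: "degree (map_poly complex_of_real p) = degree p"
  by (simp add: degree_map_poly)

lemma poly_map_of_real_power:
  fixes p :: "real poly"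
  shows "poly (map_poly complex_of_real (p^k)) z = (poly (map_poly complex_of_real p) z)^k"
  by (induction k) (auto simp: poly_map_of_real_mult)

lemma poly_map_of_real_prod:
  fixes g :: "'a \<Rightarrow> real poly"
  shows "poly (map_poly complex_of_real (prod g A)) z = (\<Prod>x\<in>A. poly (map_poly complex_of_real (g x)) z)"
  by (induction A rule: infinite_finite_induct) (auto simp: poly_map_of_real_mult)

definition rootprod :: "real poly \<Rightarrow> real poly" where
  "rootprod f = (\<Prod>x\<in>{x. poly f x = 0}. [:-x,1:]^order x f)"

definition nroots :: "real poly \<Rightarrow> nat" where
  "nroots f = (\<Sum>x\<in>{x. poly f x = 0}. order x f)"

lemma prod_roots_dvd:
  fixes f :: "real poly"
  assumes "f \<noteq> 0" "finite A"
  shows "(\<Prod>x\<in>A. [:-x,1:]^order x f) dvd f"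
  using assms(2)
proof (induction A rule: finite_induct)
  case empty
  then show ?case by simp
next
  case (insert a A)
  then obtain G where G: "f = (\<Prod>x\<in>A. [:-x,1:]^order x f) * G" by (auto elim: dvdE)
  have nz: "(\<Prod>x\<in>A. [:-x,1:]^order x f) \<noteq> 0" using G assms(1) by auto
  have "G \<noteq> 0" using G assms(1) by auto
  have "poly (\<Prod>x\<in>A. [:-x,1:]^order x f) a \<noteq> 0"
    using insert(1,2) by (auto simp: poly_prod prod_zero_iff)
  then have o0: "order a (\<Prod>x\<in>A. [:-x,1:]^order x f) = 0"
    using order_root nz by blast
  have "order a f = order a G"
    using order_mult[of "(\<Prod>x\<in>A. [:-x,1:]^order x f)" G a] G assms(1) o0 by simp
  then have "[:-a,1:]^order a f dvd G" using order_1[of a G] by simp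
  then have "[:-a,1:]^order a f * (\<Prod>x\<in>A. [:-x,1:]^order x f) dvd (\<Prod>x\<in>A. [:-x,1:]^order x f) * G"
    by (simp add: mult.commute mult_dvd_mono)
  then show ?case using insert G by simp
qed

lemma rootprod_dvd: "f \<noteq> 0 \<Longrightarrow> rootprod f dvd f"
  unfolding rootprod_def by (rule prod_roots_dvd) (auto simp: poly_roots_finite)

lemma degree_rootprod: "f \<noteq> 0 \<Longrightarrow> degree (rootprod f) = nroots f"
  unfolding rootprod_def nroots_def
  by (subst degree_prod_eq_sum_degree) (auto simp: degree_linear_power)

lemma cofactor_no_root:
  fixes f G :: "real poly"
  assumes "f \<noteq> 0" "f = rootprod f * G"
  shows "poly G x \<noteq> 0"
proof
  assume "poly G x = 0"
  then have d1: "[:-x,1:] dvd G" by (simp add: dvd_iff_poly_eq_0)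
  then have "poly f x = 0" using assms(2) by (metis mult_zero_right poly_mult \<open>poly G x = 0\<close>)
  then have "[:-x,1:]^order x f dvd rootprod f"
    unfolding rootprod_def by (intro dvd_prodI) (auto simp: poly_roots_finite assms(1))
  then have "[:-x,1:]^order x f * [:-x,1:] dvd rootprod f * G"
    using d1 by (rule mult_dvd_mono)
  then have "[:-x,1:]^Suc (order x f) dvd f" using assms(2) by (simp add: mult.commute)
  then show False using order_divides[of x "Suc (order x f)" f] assms(1) Suc_n_not_le_n by metis
qed

lemma real_rooted_count:
  fixes f :: "real poly"
  assumes "f \<noteq> 0"
  shows "real_rooted f \<longleftrightarrow> degree f \<le> nroots f"
    and "nroots f \<le> degree f"
proof -
  obtain G where G: "f = rootprod f * G" using rootprod_dvd[OF assms] by (auto elim: dvdE)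
  have G0: "G \<noteq> 0" "rootprod f \<noteq> 0" using G assms by auto
  have dg: "degree f = nroots f + degree G"
    using G G0 degree_mult_eq[of "rootprod f" G] degree_rootprod[OF assms] by simp
  then show "nroots f \<le> degree f" by simp
  have nr: "poly G x \<noteq> 0" for x using cofactor_no_root[OF assms G] .
  show "real_rooted f \<longleftrightarrow> degree f \<le> nroots f"
  proof
    assume rr: "real_rooted f"
    show "degree f \<le> nroots f"
    proof (rule ccontr)
      assume "\<not> ?thesis"
      then have "degree (map_poly complex_of_real G) > 0" using dg degree_map_of_real by simp
      then obtain z where z: "poly (map_poly complex_of_real G) z = 0"
        using fundamental_theorem_of_algebra constant_degree by (metis neq0_conv)
      then have "poly (map_poly complex_of_real f) z = 0"
        by (subst G) (simp add: poly_map_of_real_mult)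
      then have "z \<in> \<real>" using rr unfolding real_rooted_def by blast
      then obtain r where "z = of_real r" by (auto elim: Reals_cases)
      then have "poly G r = 0" using z poly_map_of_real by (metis of_real_eq_0_iff)
      then show False using nr by blast
    qed
  next
    assume "degree f \<le> nroots f"
    then have "degree G = 0" using dg by simp
    then obtain c where c: "G = [:c:]" by (metis degree_eq_zeroE)
    then have "c \<noteq> 0" using G0 by simp
    show "real_rooted f"
      unfolding real_rooted_def
    proof (intro conjI allI impI)
      show "f \<noteq> 0" by fact
      fix z assume "poly (map_poly complex_of_real f) z = 0"
      have pc: "poly (map_poly complex_of_real G) z = of_real c" by (simp add: c map_poly_pCons)
      from \<open>poly (map_poly complex_of_real f) z = 0\<close>
      have "poly (map_poly complex_of_real (rootprod f)) z * of_real c = 0"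
        by (subst (asm) G, simp only: poly_map_of_real_mult pc)
      then have "poly (map_poly complex_of_real (rootprod f)) z = 0" using \<open>c \<noteq> 0\<close> by simp
      then have "(\<Prod>x\<in>{x. poly f x = 0}. (z - of_real x)^order x f) = 0"
        unfolding rootprod_def poly_map_of_real_prod poly_map_of_real_power
        by (simp add: map_poly_pCons)
      then obtain x where "(z - of_real x)^order x f = 0"
        using prod_zero_iff poly_roots_finite[OF assms] by (metis (no_types, lifting))
      then have "z = of_real x" by simp
      then show "z \<in> \<real>" by simp
    qed
  qed
qed


lemma real_rooted_has_root:
  assumes "real_rooted f" "degree f > 0"
  obtains a where "poly f a = 0"
proof -
  have "degree (map_poly complex_of_real f) > 0" using assms degree_map_of_real by simp
  then have "\<not> constant (poly (map_poly complex_of_real f))" using constant_degree[THEN iffD1] by fastforce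
  then obtain z where z: "poly (map_poly complex_of_real f) z = 0"
    using fundamental_theorem_of_algebra by blast
  then have "z \<in> \<real>" using assms unfolding real_rooted_def by blast
  then obtain r where "z = of_real r" by (auto elim: Reals_cases)
  then have "poly f r = 0" using z poly_map_of_real by (metis of_real_eq_0_iff)
  then show ?thesis using that by blast
qed

lemma laguerre:
  fixes f :: "real poly"
  assumes "real_rooted f"
  shows "poly f x * poly (pderiv (pderiv f)) x - (poly (pderiv f) x)^2 \<le> 0 \<and>
    (degree f > 0 \<longrightarrow> poly f x \<noteq> 0 \<longrightarrow> poly f x * poly (pderiv (pderiv f)) x - (poly (pderiv f) x)^2 < 0)"
  using assms
proof (induction "degree f" arbitrary: f)
  case 0
  then obtain c where "f = [:c:]" by (metis degree_eq_zeroE)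
  then show ?case by (simp add: pderiv_pCons)
next
  case (Suc d)
  obtain a where a: "poly f a = 0" using real_rooted_has_root[of f] Suc by auto
  then have "[:-a,1:] dvd f" by (simp add: dvd_iff_poly_eq_0)
  then obtain g where g: "f = [:-a,1:] * g" by (elim dvdE)
  have f0: "f \<noteq> 0" using Suc(3) unfolding real_rooted_def by simp
  then have g0: "g \<noteq> 0" using g by auto
  have dg: "degree g = d" using Suc(2) g g0 degree_mult_eq[of "[:-a,1:]" g] by simp
  have rg: "real_rooted g"
    unfolding real_rooted_def
  proof (intro conjI allI impI)
    show "g \<noteq> 0" by fact
    fix z assume "poly (map_poly complex_of_real g) z = 0"
    then have "poly (map_poly complex_of_real f) z = 0" unfolding g poly_map_of_real_mult by simp
    then show "z \<in> \<real>" using Suc(3) unfolding real_rooted_def by blast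
  qed
  have IH: "poly g x * poly (pderiv (pderiv g)) x - (poly (pderiv g) x)^2 \<le> 0"
    using Suc(1)[OF dg[symmetric] rg] by blast
  have eq: "poly f x * poly (pderiv (pderiv f)) x - (poly (pderiv f) x)^2 =
     (x - a)^2 * (poly g x * poly (pderiv (pderiv g)) x - (poly (pderiv g) x)^2) - (poly g x)^2"
  proof -
    have d1: "pderiv f = [:-a,1:] * pderiv g + g" unfolding g pderiv_mult by (simp add: pderiv_pCons one_pCons[symmetric])
    have d2: "pderiv (pderiv f) = [:-a,1:] * pderiv (pderiv g) + (pderiv g + pderiv g)"
    proof -
      have "pderiv ([:-a,1:] * pderiv g) = [:-a,1:] * pderiv (pderiv g) + pderiv g"
        unfolding pderiv_mult by (simp add: pderiv_pCons one_pCons[symmetric])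
      then show ?thesis unfolding d1 pderiv_add by (simp add: add.assoc)
    qed
    show ?thesis unfolding d2 unfolding d1 unfolding g poly_mult poly_add
      by (simp add: power2_eq_square algebra_simps)
  qed
  have "(x - a)^2 * (poly g x * poly (pderiv (pderiv g)) x - (poly (pderiv g) x)^2) \<le> 0"
    using IH by (simp add: mult_nonneg_nonpos)
  moreover have "poly f x \<noteq> 0 \<Longrightarrow> poly g x \<noteq> 0" by (simp add: g)
  moreover have "(poly g x)^2 \<ge> 0" by simp
  moreover have "poly g x \<noteq> 0 \<Longrightarrow> (poly g x)^2 > 0" by simp
  ultimately show ?case unfolding eq by (smt (verit))
qed


lemma sign_change:
  fixes p :: "real poly"
  assumes "t < t'" "poly p t = 0" "poly p t' = 0" "poly (pderiv p) t < 0" "poly (pderiv p) t' < 0"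
  shows "\<exists>x. t < x \<and> x < t' \<and> poly p x = 0"
proof -
  obtain d1 where d1: "d1 > 0" "\<forall>h>0. h < d1 \<longrightarrow> poly p t > poly p (t+h)"
    using DERIV_neg_dec_right[OF poly_DERIV assms(4)] by blast
  obtain d2 where d2: "d2 > 0" "\<forall>h>0. h < d2 \<longrightarrow> poly p t' < poly p (t'-h)"
    using DERIV_neg_dec_left[OF poly_DERIV assms(5)] by blast
  define h where "h = min (min d1 d2) (t'-t) / 3"
  have h: "h > 0" "h < d1" "h < d2" "t + h < t' - h" using d1 d2 assms(1) by (auto simp: h_def min_def field_simps)
  have "poly p (t+h) < 0" "poly p (t'-h) > 0" using d1 d2 h assms by auto
  from poly_IVT_pos[OF h(4) this] obtain x where "t + h < x" "x < t' - h" "poly p x = 0" by blast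
  then show ?thesis using h by (intro exI[of _ x]) auto
qed

lemma sign_change':
  fixes p :: "real poly"
  assumes "t < t'" "poly p t = 0" "poly p t' = 0" "poly (pderiv p) t > 0" "poly (pderiv p) t' > 0"
  shows "\<exists>x. t < x \<and> x < t' \<and> poly p x = 0"
  using sign_change[of t t' "-p"] assms by (simp add: pderiv_minus)

lemma unbounded:
  fixes Q :: "real poly"
  assumes "degree Q > 0"
  shows "\<exists>y>t. \<bar>poly Q y\<bar> > B" and "\<exists>y<t. \<bar>poly Q y\<bar> > B"
proof -
  have "filterlim (poly Q) at_infinity at_infinity" by (rule filterlim_poly_at_infinity) fact
  then have "eventually (\<lambda>x. \<bar>B\<bar> + 1 \<le> norm (poly Q x)) at_infinity"
    using filterlim_at_infinity[of 0 "poly Q" at_infinity] by auto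
  then obtain b where b: "\<And>x. b \<le> norm x \<Longrightarrow> \<bar>B\<bar> + 1 \<le> norm (poly Q x)"
    by (auto simp: eventually_at_infinity)
  show "\<exists>y>t. \<bar>poly Q y\<bar> > B"
  proof (intro exI conjI)
    have "b \<le> norm (\<bar>b\<bar> + \<bar>t\<bar> + 1)" by simp
    from b[OF this] show "B < \<bar>poly Q (\<bar>b\<bar> + \<bar>t\<bar> + 1)\<bar>" by simp
  qed simp
  show "\<exists>y<t. \<bar>poly Q y\<bar> > B"
  proof (intro exI conjI)
    have "b \<le> norm (- (\<bar>b\<bar> + \<bar>t\<bar> + 1))" by simp
    from b[OF this] show "B < \<bar>poly Q (- (\<bar>b\<bar> + \<bar>t\<bar> + 1))\<bar>" by simp
  qed simp
qed

lemma right_pos: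
  fixes Q :: "real poly"
  assumes "degree Q > 0" "poly Q t > 0" "poly (pderiv Q) t = 0" "poly (pderiv (pderiv Q)) t < 0"
    and "\<forall>x>t. poly (pderiv Q) x \<noteq> 0"
  shows "\<exists>r>t. poly Q r = 0"
proof (rule ccontr)
  assume nr: "\<not> ?thesis"
  obtain d1 where d1: "d1 > 0" "\<forall>h>0. h < d1 \<longrightarrow> poly (pderiv Q) t > poly (pderiv Q) (t+h)"
    using DERIV_neg_dec_right[OF poly_DERIV assms(4)] by blast
  have pneg: "poly (pderiv Q) y < 0" if "y > t" for y
  proof (rule ccontr)
    assume "\<not> poly (pderiv Q) y < 0"
    then have py: "poly (pderiv Q) y > 0" using assms(5) that by force
    define h where "h = min d1 (y - t) / 2"
    have h: "h > 0" "h < d1" "t + h < y" using d1 that by (auto simp: h_def min_def field_simps)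
    then have "poly (pderiv Q) (t+h) < 0" using d1 assms(3) by auto
    from poly_IVT_pos[OF h(3) this py] obtain x where "t + h < x" "poly (pderiv Q) x = 0" by blast
    then show False using assms(5) h by auto
  qed
  have Qpos: "poly Q y > 0" if "y > t" for y
  proof (rule ccontr)
    assume "\<not> poly Q y > 0"
    then have "poly Q y < 0" using nr that by force
    from poly_IVT_neg[OF that assms(2) this] show False using nr by auto
  qed
  have Qlt: "poly Q y < poly Q t" if yt: "y > t" for y
  proof -
    obtain x where "t < x" "x < y" "poly Q y - poly Q t = (y - t) * poly (pderiv Q) x"
      using poly_MVT[OF yt] by blast
    moreover have "(y - t) * poly (pderiv Q) x < 0" using pneg[OF \<open>t < x\<close>] yt
      by (simp add: mult_pos_neg)
    ultimately show ?thesis by simp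
  qed
  obtain y where "y > t" "\<bar>poly Q y\<bar> > poly Q t" using unbounded(1)[OF assms(1)] by blast
  then show False using Qpos Qlt by force
qed

lemma left_pos:
  fixes Q :: "real poly"
  assumes "degree Q > 0" "poly Q t > 0" "poly (pderiv Q) t = 0" "poly (pderiv (pderiv Q)) t < 0"
    and "\<forall>x<t. poly (pderiv Q) x \<noteq> 0"
  shows "\<exists>r<t. poly Q r = 0"
proof (rule ccontr)
  assume nr: "\<not> ?thesis"
  obtain d1 where d1: "d1 > 0" "\<forall>h>0. h < d1 \<longrightarrow> poly (pderiv Q) t < poly (pderiv Q) (t-h)"
    using DERIV_neg_dec_left[OF poly_DERIV assms(4)] by blast
  have ppos: "poly (pderiv Q) y > 0" if "y < t" for y
  proof (rule ccontr)
    assume "\<not> poly (pderiv Q) y > 0"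
    then have py: "poly (pderiv Q) y < 0" using assms(5) that by force
    define h where "h = min d1 (t - y) / 2"
    have h: "h > 0" "h < d1" "y < t - h" using d1 that by (auto simp: h_def min_def field_simps)
    then have "poly (pderiv Q) (t-h) > 0" using d1 assms(3) by auto
    from poly_IVT_pos[OF h(3) py this] obtain x where "x < t - h" "poly (pderiv Q) x = 0" by blast
    then show False using assms(5) h by auto
  qed
  have Qpos: "poly Q y > 0" if "y < t" for y
  proof (rule ccontr)
    assume "\<not> poly Q y > 0"
    then have "poly Q y < 0" using nr that by force
    from poly_IVT_pos[OF that this assms(2)] show False using nr by auto
  qed
  have Qlt: "poly Q y < poly Q t" if yt: "y < t" for y
  proof -
    obtain x where "y < x" "x < t" "poly Q t - poly Q y = (t - y) * poly (pderiv Q) x"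
      using poly_MVT[OF yt] by blast
    moreover have "(t - y) * poly (pderiv Q) x > 0" using ppos[OF \<open>x < t\<close>] yt
      by simp
    ultimately show ?thesis by simp
  qed
  obtain y where "y < t" "\<bar>poly Q y\<bar> > poly Q t" using unbounded(2)[OF assms(1)] by blast
  then show False using Qpos Qlt by force
qed

lemma right_neg:
  fixes Q :: "real poly"
  assumes "degree Q > 0" "poly Q t < 0" "poly (pderiv Q) t = 0" "poly (pderiv (pderiv Q)) t > 0"
    and "\<forall>x>t. poly (pderiv Q) x \<noteq> 0"
  shows "\<exists>r>t. poly Q r = 0"
  using right_pos[of "-Q" t] assms by (simp add: pderiv_minus)

lemma left_neg:
  fixes Q :: "real poly"
  assumes "degree Q > 0" "poly Q t < 0" "poly (pderiv Q) t = 0" "poly (pderiv (pderiv Q)) t > 0"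
    and "\<forall>x<t. poly (pderiv Q) x \<noteq> 0"
  shows "\<exists>r<t. poly Q r = 0"
  using left_pos[of "-Q" t] assms by (simp add: pderiv_minus)


theorem lemma2p5:
  fixes p P :: "real poly" and C :: real
  assumes "degree p > 0"
    and "real_rooted p"
    and "pderiv P = p" and "poly P 0 = 0"
  shows "real_rooted (P + [:C:]) \<longleftrightarrow>
    (\<forall>\<mu>. poly p \<mu> = 0 \<longrightarrow>
       (poly (pderiv p) \<mu> < 0 \<longrightarrow> poly P \<mu> + C \<ge> 0) \<and>
       (poly (pderiv p) \<mu> > 0 \<longrightarrow> poly P \<mu> + C \<le> 0) \<and>
       (poly (pderiv p) \<mu> = 0 \<longrightarrow> poly P \<mu> + C = 0))"
proof -
  define Q where "Q = P + [:C:]"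
  have pQ: "pderiv Q = p" unfolding Q_def using assms(3) by (simp add: pderiv_add pderiv_pCons)
  have polyQ: "poly P x + C = poly Q x" for x unfolding Q_def by simp
  have p0: "p \<noteq> 0" using assms(1) by auto
  have degQ: "degree Q = degree p + 1"
  proof -
    have "degree p = degree P - 1" using assms(3) degree_pderiv by metis
    then have dP: "degree P = degree p + 1" using assms(1) by linarith
    then have "degree [:C:] < degree P" by simp
    then show ?thesis unfolding Q_def using dP by (simp add: degree_add_eq_left)
  qed
  have Q0: "Q \<noteq> 0" using degQ by auto
  have dQ: "degree Q > 0" using degQ by simp
  let ?H = "\<forall>\<mu>. poly p \<mu> = 0 \<longrightarrow> poly Q \<mu> \<noteq> 0 \<longrightarrow>
     (poly (pderiv p) \<mu> < 0 \<and> poly Q \<mu> > 0) \<or> (poly (pderiv p) \<mu> > 0 \<and> poly Q \<mu> < 0)"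
  have condeq: "(\<forall>\<mu>. poly p \<mu> = 0 \<longrightarrow>
       (poly (pderiv p) \<mu> < 0 \<longrightarrow> poly P \<mu> + C \<ge> 0) \<and>
       (poly (pderiv p) \<mu> > 0 \<longrightarrow> poly P \<mu> + C \<le> 0) \<and>
       (poly (pderiv p) \<mu> = 0 \<longrightarrow> poly P \<mu> + C = 0)) \<longleftrightarrow> ?H"
    unfolding polyQ by (intro iff_allI) (smt (verit))
  have "real_rooted Q \<longleftrightarrow> ?H"
  proof
    assume rr: "real_rooted Q"
    show ?H
    proof (intro allI impI)
      fix \<mu> assume a: "poly p \<mu> = 0" "poly Q \<mu> \<noteq> 0"
      have "poly Q \<mu> * poly (pderiv p) \<mu> - (poly p \<mu>)^2 < 0"
        using laguerre[OF rr, of \<mu>] dQ a(2) unfolding pQ by blast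
      then have "poly Q \<mu> * poly (pderiv p) \<mu> < 0" using a(1) by simp
      then show "(poly (pderiv p) \<mu> < 0 \<and> poly Q \<mu> > 0) \<or> (poly (pderiv p) \<mu> > 0 \<and> poly Q \<mu> < 0)"
        by (auto simp: mult_less_0_iff)
    qed
  next
    assume H: ?H
    define R where "R = {x. poly Q x = 0}"
    define S where "S = {x. poly p x = 0}"
    define T where "T = S - R"
    have fR: "finite R" unfolding R_def using poly_roots_finite[OF Q0] .
    have fS: "finite S" unfolding S_def using poly_roots_finite[OF p0] .
    have fT: "finite T" unfolding T_def using fS by simp
    have Hs: "(poly (pderiv p) x < 0 \<and> poly Q x > 0) \<or> (poly (pderiv p) x > 0 \<and> poly Q x < 0)"
      if "x \<in> T" for x
    proof -
      have "poly p x = 0" "poly Q x \<noteq> 0" using that unfolding T_def S_def R_def by auto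
      then show ?thesis using H by blast
    qed
    have Tsimple: "poly (pderiv p) x \<noteq> 0" if "x \<in> T" for x
      using Hs[OF that] by auto
    have ordQ: "order x Q = Suc (order x p)" if "x \<in> R" for x
      using order_pderiv[OF Q0, of x] that unfolding R_def pQ by simp
    have ordT: "order x p = 1" if "x \<in> T" for x
    proof -
      have "poly p x = 0" using that unfolding T_def S_def by simp
      then have "order x p = Suc (order x (pderiv p))" using order_pderiv[OF p0] by simp
      moreover have "pderiv p \<noteq> 0" using Tsimple[OF that] by auto
      then have "order x (pderiv p) = 0" using Tsimple[OF that] order_root by blast
      ultimately show ?thesis by simp
    qed
    have ordnS: "order x p = 0" if "x \<notin> S" for x
      using that order_root p0 unfolding S_def by blast
    have Np: "nroots p = degree p"
      using real_rooted_count[OF p0] assms(2) by simp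
    have NQ: "nroots Q = (\<Sum>x\<in>R. order x p) + card R"
    proof -
      have "nroots Q = (\<Sum>x\<in>R. Suc (order x p))"
        unfolding nroots_def R_def[symmetric] using ordQ by (rule sum.cong[OF refl])
      also have "\<dots> = (\<Sum>x\<in>R. order x p + 1)" by simp
      also have "\<dots> = (\<Sum>x\<in>R. order x p) + (\<Sum>x\<in>R. 1)" by (rule sum.distrib)
      finally show ?thesis by simp
    qed
    have sumR: "(\<Sum>x\<in>R. order x p) = (\<Sum>x\<in>S \<inter> R. order x p)"
    proof (rule sum.mono_neutral_right)
      show "\<forall>x\<in>R - S \<inter> R. order x p = 0" using ordnS by blast
    qed (use fR in auto)
    have sumS: "nroots p = (\<Sum>x\<in>S \<inter> R. order x p) + (\<Sum>x\<in>T. order x p)"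
      unfolding nroots_def S_def[symmetric] T_def using sum.Int_Diff[OF fS] by blast
    have sumT: "(\<Sum>x\<in>T. order x p) = card T"
    proof -
      have "(\<Sum>x\<in>T. order x p) = (\<Sum>x\<in>T. 1)" using ordT by (rule sum.cong[OF refl])
      then show ?thesis by simp
    qed
    have cardR: "card R \<ge> card T + 1"
    proof (cases "T = {}")
      case True
      obtain a where "poly p a = 0" using real_rooted_has_root[OF assms(2,1)] by blast
      then have "a \<in> R" using True unfolding T_def S_def by auto
      then have "card R > 0" using fR card_gt_0_iff by blast
      then show ?thesis using True by simp
    next
      case False
      have inT: "poly p t = 0" "poly Q t \<noteq> 0" if "t \<in> T" for t
        using that unfolding T_def S_def R_def by auto
      have notT: "poly Q x = 0" if "poly p x = 0" "x \<notin> T" for x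
        using that unfolding T_def S_def R_def by auto
      have rootsRight: "\<exists>r. poly Q r = 0 \<and> t < r \<and> (\<forall>t'\<in>T. t < t' \<longrightarrow> r < t')" if tT: "t \<in> T" for t
      proof (cases "{t'\<in>T. t < t'} = {}")
        case True
        then have nT: "\<forall>x>t. x \<notin> T" by auto
        show ?thesis
        proof (cases "\<exists>x>t. poly p x = 0")
          case True
          then obtain x where "x > t" "poly p x = 0" by blast
          then show ?thesis using nT notT by blast
        next
          case False
          then have np: "\<forall>x>t. poly (pderiv Q) x \<noteq> 0" unfolding pQ by blast
          from Hs[OF tT] consider "poly (pderiv p) t < 0 \<and> poly Q t > 0" | "poly (pderiv p) t > 0 \<and> poly Q t < 0"
            by blast
          then obtain r where "r > t" "poly Q r = 0"
          proof cases
            case 1 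
            have "\<exists>r>t. poly Q r = 0"
              by (rule right_pos[OF dQ]) (use 1 inT[OF tT] np in \<open>simp_all add: pQ\<close>)
            then show ?thesis using that by blast
          next
            case 2 
            have "\<exists>r>t. poly Q r = 0"
              by (rule right_neg[OF dQ]) (use 2 inT[OF tT] np in \<open>simp_all add: pQ\<close>)
            then show ?thesis using that by blast
          qed
          then show ?thesis using nT by blast
        qed
      next
        case False
        define t' where "t' = Min {t'\<in>T. t < t'}"
        have fU: "finite {t'\<in>T. t < t'}" using fT by simp
        have t'U: "t' \<in> {t'\<in>T. t < t'}" unfolding t'_def using Min_in[OF fU False] .
        have t'min: "t' \<le> u" if "u \<in> T" "t < u" for u
          unfolding t'_def using Min_le[OF fU] that by blast
        have "\<exists>r. t < r \<and> r < t' \<and> poly Q r = 0"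
        proof (rule ccontr)
          assume nr: "\<not> ?thesis"
          have tt': "t < t'" "t' \<in> T" using t'U by auto
          have noT: "x \<notin> T" if "t < x" "x < t'" for x 
          proof
            assume "x \<in> T"
            then have "t' \<le> x" using t'min that by blast
            then show False using that by simp
          qed
          have same: "(poly Q t > 0 \<and> poly Q t' > 0) \<or> (poly Q t < 0 \<and> poly Q t' < 0)"
          proof -
            have "\<not> (poly Q t > 0 \<and> poly Q t' < 0)"
              using poly_IVT_neg[OF tt'(1), of Q] nr by blast
            moreover have "\<not> (poly Q t < 0 \<and> poly Q t' > 0)"
              using poly_IVT_pos[OF tt'(1), of Q] nr by blast
            moreover have "poly Q t \<noteq> 0" "poly Q t' \<noteq> 0" using inT[OF tT] inT[OF tt'(2)] by auto
            ultimately show ?thesis by linarith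
          qed
          then obtain x where x: "t < x" "x < t'" "poly p x = 0"
          proof
            assume "poly Q t > 0 \<and> poly Q t' > 0"
            then have "poly (pderiv p) t < 0" "poly (pderiv p) t' < 0"
              using Hs[OF tT] Hs[OF tt'(2)] by auto
            then show ?thesis using sign_change[OF tt'(1)] inT[OF tT] inT[OF tt'(2)] that by blast
          next
            assume "poly Q t < 0 \<and> poly Q t' < 0"
            then have "poly (pderiv p) t > 0" "poly (pderiv p) t' > 0"
              using Hs[OF tT] Hs[OF tt'(2)] by auto
            then show ?thesis using sign_change'[OF tt'(1)] inT[OF tT] inT[OF tt'(2)] that by blast
          qed
          then have "poly Q x = 0" using notT noT by blast
          then show False using nr x by blast
        qed
        then obtain r where r: "t < r" "r < t'" "poly Q r = 0" by blast
        have "\<forall>u\<in>T. t < u \<longrightarrow> r < u"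
        proof (intro ballI impI)
          fix u assume "u \<in> T" "t < u"
          then have "t' \<le> u" using t'min by blast
          then show "r < u" using r by simp
        qed
        then show ?thesis using r by blast
      qed
      then have "\<forall>t\<in>T. \<exists>r. poly Q r = 0 \<and> t < r \<and> (\<forall>t'\<in>T. t < t' \<longrightarrow> r < t')" by blast
      then have "\<exists>g. \<forall>t\<in>T. poly Q (g t) = 0 \<and> t < g t \<and> (\<forall>t'\<in>T. t < t' \<longrightarrow> g t < t')"
        by (rule bchoice)
      then obtain g where g: "\<forall>t\<in>T. poly Q (g t) = 0 \<and> t < g t \<and> (\<forall>t'\<in>T. t < t' \<longrightarrow> g t < t')"
        by blast
      define t0 where "t0 = Min T"
      have t0T: "t0 \<in> T" unfolding t0_def using Min_in[OF fT False] .
      have t0min: "t0 \<le> u" if "u \<in> T" for u unfolding t0_def using Min_le[OF fT that] .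
      obtain r0 where r0: "r0 < t0" "poly Q r0 = 0"
      proof (cases "\<exists>x<t0. poly p x = 0")
        case True
        then obtain x where "x < t0" "poly p x = 0" by blast
        moreover have "x \<notin> T"
        proof
          assume "x \<in> T" then have "t0 \<le> x" using t0min by blast
          then show False using \<open>x < t0\<close> by simp
        qed
        ultimately show ?thesis using notT that by blast
      next
        case False
        then have np: "\<forall>x<t0. poly (pderiv Q) x \<noteq> 0" unfolding pQ by blast
        from Hs[OF t0T] consider "poly (pderiv p) t0 < 0 \<and> poly Q t0 > 0" | "poly (pderiv p) t0 > 0 \<and> poly Q t0 < 0"
          by blast
        then show ?thesis
        proof cases
          case 1 
            have "\<exists>r<t0. poly Q r = 0"
              by (rule left_pos[OF dQ]) (use 1 inT[OF t0T] np in \<open>simp_all add: pQ\<close>)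
            then show ?thesis using that by blast
        next
          case 2 
            have "\<exists>r<t0. poly Q r = 0"
              by (rule left_neg[OF dQ]) (use 2 inT[OF t0T] np in \<open>simp_all add: pQ\<close>)
            then show ?thesis using that by blast
        qed
      qed
      have inj: "inj_on g T"
      proof (rule inj_onI)
        fix a b assume ab: "a \<in> T" "b \<in> T" "g a = g b"
        show "a = b"
        proof (rule ccontr)
          assume "a \<noteq> b"
          then consider "a < b" | "b < a" by linarith
          then show False
          proof cases
            case 1
            have "g a < b" using g ab(1,2) 1 by blast
            moreover have "b < g b" using g ab(2) by blast
            ultimately show False using ab(3) by simp
          next
            case 2
            have "g b < a" using g ab(1,2) 2 by blast
            moreover have "a < g a" using g ab(1) by blast
            ultimately show False using ab(3) by simp
          qed
        qed
      qed
      have r0g: "r0 \<notin> g ` T"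
      proof
        assume "r0 \<in> g ` T"
        then obtain u where "u \<in> T" "r0 = g u" by blast
        then have "u < g u" "t0 \<le> u" using g t0min by auto
        then show False using r0 \<open>r0 = g u\<close> by simp
      qed
      have sub: "insert r0 (g ` T) \<subseteq> R" using g r0 unfolding R_def by auto
      have "card (insert r0 (g ` T)) = card T + 1"
        using r0g fT card_image[OF inj] by simp
      then show ?thesis using card_mono[OF fR sub] by simp
    qed
    have "nroots Q \<ge> degree Q"
      using NQ sumR sumS sumT cardR Np degQ by linarith
    then show "real_rooted Q" using real_rooted_count(1)[OF Q0] by simp
  qed
  then show ?thesis using condeq unfolding Q_def by simp
qed

end
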